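(* Let $p:X\to Y$ be a continuous surjective map with $X$ connected and $Y$ a topological group. Suppose there is an open neighborhood $U$ of $1_Y$ such that $\mathcal U=\{U\cdot y\}_{y\in Y}$ is an overlay cover of $Y$ for $p$, and that $p$ has a regular overlay structure. Then there is a structure of a topological group on $X$ (compatible with its topology) making $p$ a continuous homomorphism.
   Context: For a continuous map $p:X\to Y$: a slice of $p$ is an open set $U\subseteq X$ such that $p^{-1}(p(U))$ is the disjoint union of a family of open sets $U_s$ ($s\in S$), each mapped by $p$ homeomorphically onto $p(U)$, with $U=U_t$ for some $t\in S$. A covering structure of $p$ is an open cover $\mathcal S$ of $X$ by slices of $p$ such that for every $U\in\mathcal S$, $p^{-1}(p(U))$ is the disjoint union of a family $\{U_j\}_{j\in J}$ of elements of $\mathcal S$, each mapped homeomorphically onto $p(U)$. For $x\in X$, $st(x,\mathcal S)=\bigcup\{U\in\mathcal S: x\in U\}$. An overlay structure of $p$ is a covering structure $\mathcal S$ such that $st(x,\mathcal S)$ is a slice of $p$ for every $x\in X$; a cover of the form $p(\mathcal S)=\{p(V):V\in\mathcal S\}$ with $\mathcal S$ an overlay structure is an overlay cover of $Y$. For a cover $\mathcal W$ of a set $Z$, a $\mathcal W$-chain is a finite sequence $\{z_0,\dots,z_n\}$ such that for each $0\le i<n$ some $W\in\mathcal W$ contains $z_i$ and $z_{i+1}$; it is a $\mathcal W$-loop if $z_0=z_n$. A lift of $\{y_0,\dots,y_n\}$ is a sequence $\{x_0,\dots,x_n\}$ with $p(x_i)=y_i$. An overlay structure $\mathcal S$ with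 overlay cover $\mathcal U$ is regular if there is no $\mathcal U$-loop having one lift that is an $\mathcal S$-chain which is a loop and another lift that is an $\mathcal S$-chain which is not a loop. (For connected $X$, if one overlay structure of $p$ is regular then all are.) *)

theory Defs
  imports "HOL-Analysis.Analysis"
begin

definition topological_group ::
  "'a topology \<Rightarrow> ('a \<Rightarrow> 'a \<Rightarrow> 'a) \<Rightarrow> ('a \<Rightarrow> 'a) \<Rightarrow> 'a \<Rightarrow> bool" where
  "topological_group T m i e \<longleftrightarrow>
     e \<in> topspace T \<and>
     (\<forall>a\<in>topspace T. \<forall>b\<in>topspace T. m a b \<in> topspace T) \<and>
     (\<forall>a\<in>topspace T. i a \<in> topspace T) \<and>
     (\<forall>a\<in>topspace T. \<forall>b\<in>topspace T. \<forall>c\<in>topspace T. m (m a b) c = m a (m b c)) \<and>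
     (\<forall>a\<in>topspace T. m e a = a \<and> m a e = a) \<and>
     (\<forall>a\<in>topspace T. m (i a) a = e \<and> m a (i a) = e) \<and>
     continuous_map (prod_topology T T) T (\<lambda>(a, b). m a b) \<and>
     continuous_map T T i"

definition sheet_decomposition ::
  "'a topology \<Rightarrow> 'b topology \<Rightarrow> ('a \<Rightarrow> 'b) \<Rightarrow> 'a set \<Rightarrow> 'a set set \<Rightarrow> bool" where
  "sheet_decomposition X Y p U F \<longleftrightarrow>
     (\<forall>V\<in>F. openin X V) \<and>
     pairwise disjnt F \<and>
     \<Union>F = {x \<in> topspace X. p x \<in> p ` U} \<and>
     (\<forall>V\<in>F. homeomorphic_map (subtopology X V) (subtopology Y (p ` U)) p)"

definition slice :: "'a topology \<Rightarrow> 'b topology \<Rightarrow> ('a \<Rightarrow> 'b) \<Rightarrow> 'a set \<Rightarrow> bool" where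
  "slice X Y p U \<longleftrightarrow> openin X U \<and> (\<exists>F. sheet_decomposition X Y p U F \<and> U \<in> F)"

definition covering_structure ::
  "'a topology \<Rightarrow> 'b topology \<Rightarrow> ('a \<Rightarrow> 'b) \<Rightarrow> 'a set set \<Rightarrow> bool" where
  "covering_structure X Y p S \<longleftrightarrow>
     (\<forall>U\<in>S. slice X Y p U) \<and> \<Union>S = topspace X \<and>
     (\<forall>U\<in>S. \<exists>J. J \<subseteq> S \<and> sheet_decomposition X Y p U J)"

definition star :: "'a \<Rightarrow> 'a set set \<Rightarrow> 'a set" where
  "star x S = \<Union>{U \<in> S. x \<in> U}"

definition overlay_structure ::
  "'a topology \<Rightarrow> 'b topology \<Rightarrow> ('a \<Rightarrow> 'b) \<Rightarrow> 'a set set \<Rightarrow> bool" where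
  "overlay_structure X Y p S \<longleftrightarrow>
     covering_structure X Y p S \<and> (\<forall>x\<in>topspace X. slice X Y p (star x S))"

definition is_chain :: "'a set set \<Rightarrow> 'a list \<Rightarrow> bool" where
  "is_chain W zs \<longleftrightarrow> zs \<noteq> [] \<and>
     (\<forall>i. Suc i < length zs \<longrightarrow> (\<exists>V\<in>W. zs ! i \<in> V \<and> zs ! Suc i \<in> V))"

definition is_loop :: "'a list \<Rightarrow> bool" where
  "is_loop zs \<longleftrightarrow> hd zs = last zs"

definition is_lift :: "('a \<Rightarrow> 'b) \<Rightarrow> 'a list \<Rightarrow> 'b list \<Rightarrow> bool" where
  "is_lift p xs ys \<longleftrightarrow> map p xs = ys"

definition regular_overlay_structure ::
  "'a topology \<Rightarrow> 'b topology \<Rightarrow> ('a \<Rightarrow> 'b) \<Rightarrow> 'a set set \<Rightarrow> bool" where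
  "regular_overlay_structure X Y p S \<longleftrightarrow>
     overlay_structure X Y p S \<and>
     \<not> (\<exists>ys xs xs'. is_chain ((`) p ` S) ys \<and> is_loop ys \<and>
          is_lift p xs ys \<and> is_chain S xs \<and> is_loop xs \<and>
          is_lift p xs' ys \<and> is_chain S xs' \<and> \<not> is_loop xs')"

definition overlay_cover ::
  "'a topology \<Rightarrow> 'b topology \<Rightarrow> ('a \<Rightarrow> 'b) \<Rightarrow> 'b set set \<Rightarrow> bool" where
  "overlay_cover X Y p \<U> \<longleftrightarrow> (\<exists>S. overlay_structure X Y p S \<and> (`) p ` S = \<U>)"

end

theory Submission
  imports Defs
begin
lemma is_chain_single[simp]: "is_chain W [a]"
  by (simp add: is_chain_def)

lemma is_chain_Cons2: "is_chain W (a#b#l) \<longleftrightarrow> (\<exists>V\<in>W. a\<in>V \<and> b\<in>V) \<and> is_chain W (b#l)"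
proof
  assume h: "is_chain W (a#b#l)"
  have h2: "\<forall>i. Suc i < length (a#b#l) \<longrightarrow> (\<exists>V\<in>W. (a#b#l) ! i \<in> V \<and> (a#b#l) ! Suc i \<in> V)"
    using h unfolding is_chain_def by blast
  have "\<exists>V\<in>W. (a#b#l)!0\<in>V \<and> (a#b#l)!Suc 0\<in>V" using h2[rule_format, of 0] by simp
  then have "\<exists>V\<in>W. a\<in>V \<and> b\<in>V" by simp
  moreover have "is_chain W (b#l)" unfolding is_chain_def
  proof (intro conjI allI impI)
    fix i assume "Suc i < length (b#l)"
    then have "Suc (Suc i) < length (a#b#l)" by simp
    then have "\<exists>V\<in>W. (a#b#l) ! Suc i \<in> V \<and> (a#b#l) ! Suc (Suc i) \<in> V" using h unfolding is_chain_def by blast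
    then show "\<exists>V\<in>W. (b # l) ! i \<in> V \<and> (b # l) ! Suc i \<in> V" by simp
  qed simp
  ultimately show "(\<exists>V\<in>W. a\<in>V \<and> b\<in>V) \<and> is_chain W (b#l)" by blast
next
  assume h: "(\<exists>V\<in>W. a\<in>V \<and> b\<in>V) \<and> is_chain W (b#l)"
  show "is_chain W (a#b#l)" unfolding is_chain_def
  proof (intro conjI allI impI)
    fix i assume i: "Suc i < length (a#b#l)"
    show "\<exists>V\<in>W. (a#b # l) ! i \<in> V \<and> (a#b # l) ! Suc i \<in> V"
    proof (cases i)
      case 0 then show ?thesis using h by simp
    next
      case (Suc j)
      then have "Suc j < length (b#l)" using i by simp
      then have "\<exists>V\<in>W. (b # l) ! j \<in> V \<and> (b # l) ! Suc j \<in> V" using h unfolding is_chain_def by blast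
      then show ?thesis using Suc by simp
    qed
  qed simp
qed
lemma is_chain_append:
  assumes "is_chain W xs" "is_chain W ys" "\<exists>V\<in>W. last xs \<in> V \<and> hd ys \<in> V"
  shows "is_chain W (xs @ ys)"
  using assms
proof (induction xs)
  case Nil then show ?case by (simp add: is_chain_def)
next
  case (Cons a xs)
  show ?case
  proof (cases xs)
    case Nil
    then obtain y ys' where "ys = y # ys'" using Cons.prems unfolding is_chain_def by (cases ys) auto
    then show ?thesis using Cons.prems Nil by (simp add: is_chain_Cons2)
  next
    case (Cons b l)
    have "is_chain W xs" using Cons.prems(1) \<open>xs = b#l\<close> by (simp add: is_chain_Cons2)
    moreover have "last xs = last (a#xs)" using \<open>xs = b#l\<close> by simp
    ultimately have "is_chain W (xs @ ys)" using Cons.IH Cons.prems by simp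
    then show ?thesis using Cons.prems \<open>xs = b#l\<close> by (simp add: is_chain_Cons2)
  qed
qed

lemma is_chain_rev:
  assumes "is_chain W xs" shows "is_chain W (rev xs)"
  unfolding is_chain_def
proof (intro conjI allI impI)
  show "rev xs \<noteq> []" using assms by (simp add: is_chain_def)
  fix i assume i: "Suc i < length (rev xs)"
  define n where "n = length xs"
  define j where "j = n - Suc (Suc i)"
  have j: "Suc j < length xs" "Suc j = n - Suc i" "j = n - Suc (Suc i)" using i unfolding j_def n_def by auto
  have "rev xs ! i = xs ! (n - Suc i)" using i unfolding n_def by (simp add: rev_nth)
  moreover have "rev xs ! Suc i = xs ! (n - Suc (Suc i))" using i unfolding n_def by (simp add: rev_nth)
  ultimately have "rev xs ! i = xs ! Suc j" "rev xs ! Suc i = xs ! j" using j by simp_all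
  moreover have "\<exists>V\<in>W. xs ! j \<in> V \<and> xs ! Suc j \<in> V"
    using assms j(1) unfolding is_chain_def by blast
  ultimately show "\<exists>V\<in>W. rev xs ! i \<in> V \<and> rev xs ! Suc i \<in> V" by auto
qed

lemma is_chain_map:
  assumes "is_chain W xs" shows "is_chain ((`) f ` W) (map f xs)"
  unfolding is_chain_def
proof (intro conjI allI impI)
  show "map f xs \<noteq> []" using assms by (simp add: is_chain_def)
  fix i assume i: "Suc i < length (map f xs)"
  then obtain V where "V \<in> W" "xs ! i \<in> V" "xs ! Suc i \<in> V" using assms unfolding is_chain_def by auto
  then show "\<exists>V\<in>(`) f ` W. map f xs ! i \<in> V \<and> map f xs ! Suc i \<in> V" using i by auto
qed



locale tgrp =
  fixes Y :: "'b topology" and mY :: "'b \<Rightarrow> 'b \<Rightarrow> 'b" and iY :: "'b \<Rightarrow> 'b" and eY :: 'b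
  assumes tg: "topological_group Y mY iY eY"
begin

lemma e_in: "eY \<in> topspace Y" using tg by (simp add: topological_group_def)
lemma m_in: "a \<in> topspace Y \<Longrightarrow> b \<in> topspace Y \<Longrightarrow> mY a b \<in> topspace Y" using tg by (simp add: topological_group_def)
lemma i_in: "a \<in> topspace Y \<Longrightarrow> iY a \<in> topspace Y" using tg by (simp add: topological_group_def)
lemma assoc: "a \<in> topspace Y \<Longrightarrow> b \<in> topspace Y \<Longrightarrow> c \<in> topspace Y \<Longrightarrow> mY (mY a b) c = mY a (mY b c)"
  using tg by (simp add: topological_group_def)
lemma lid: "a \<in> topspace Y \<Longrightarrow> mY eY a = a" using tg by (simp add: topological_group_def)
lemma rid: "a \<in> topspace Y \<Longrightarrow> mY a eY = a" using tg by (simp add: topological_group_def)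
lemma linv: "a \<in> topspace Y \<Longrightarrow> mY (iY a) a = eY" using tg by (simp add: topological_group_def)
lemma rinv: "a \<in> topspace Y \<Longrightarrow> mY a (iY a) = eY" using tg by (simp add: topological_group_def)
lemma cont_m: "continuous_map (prod_topology Y Y) Y (\<lambda>(a, b). mY a b)" using tg by (simp add: topological_group_def)
lemma cont_i: "continuous_map Y Y iY" using tg by (simp add: topological_group_def)

lemma cont_m2:
  assumes "continuous_map T Y f" "continuous_map T Y g"
  shows "continuous_map T Y (\<lambda>t. mY (f t) (g t))"
proof -
  have "continuous_map T (prod_topology Y Y) (\<lambda>t. (f t, g t))"
    using assms by (rule continuous_map_pairedI)
  from continuous_map_compose[OF this cont_m] show ?thesis by (simp add: o_def)
qed

lemma cont_i2: "continuous_map T Y f \<Longrightarrow> continuous_map T Y (\<lambda>t. iY (f t))"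
  using continuous_map_compose[OF _ cont_i] by (simp add: o_def)

lemma cont_const: "a \<in> topspace Y \<Longrightarrow> continuous_map T Y (\<lambda>t. a)"
  by simp

lemma mr_cancel: "a \<in> topspace Y \<Longrightarrow> b \<in> topspace Y \<Longrightarrow> mY (mY a b) (iY b) = a"
  by (simp add: assoc i_in rinv rid)
lemma mr_cancel2: "a \<in> topspace Y \<Longrightarrow> b \<in> topspace Y \<Longrightarrow> mY (mY a (iY b)) b = a"
  by (simp add: assoc i_in linv rid)
lemma ml_cancel: "a \<in> topspace Y \<Longrightarrow> b \<in> topspace Y \<Longrightarrow> mY (iY a) (mY a b) = b"
  by (simp add: assoc[symmetric] i_in linv lid)
lemma ml_cancel2: "a \<in> topspace Y \<Longrightarrow> b \<in> topspace Y \<Longrightarrow> mY a (mY (iY a) b) = b"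
  by (simp add: assoc[symmetric] i_in rinv lid)

lemma shift_cancel: "x \<in> topspace Y \<Longrightarrow> g \<in> topspace Y \<Longrightarrow> h \<in> topspace Y \<Longrightarrow> mY (mY x g) (mY (iY g) h) = mY x h"
  by (simp add: assoc i_in m_in ml_cancel2)

lemma i_i: "a \<in> topspace Y \<Longrightarrow> iY (iY a) = a"
proof -
  assume a: "a \<in> topspace Y"
  have "iY (iY a) = mY (iY (iY a)) (mY (iY a) a)" using a by (simp add: linv rid i_in)
  also have "\<dots> = mY (mY (iY (iY a)) (iY a)) a" using a by (simp add: assoc i_in)
  also have "\<dots> = a" using a by (simp add: linv lid i_in)
  finally show ?thesis .
qed

lemma i_e: "iY eY = eY"
  using linv[OF e_in] rid[OF i_in[OF e_in]] by simp

lemma right_transl_open: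
  assumes "openin Y U" "g \<in> topspace Y"
  shows "openin Y ((\<lambda>u. mY u g) ` U)"
proof -
  have U: "U \<subseteq> topspace Y" using assms openin_subset by auto
  have eq: "(\<lambda>u. mY u g) ` U = {x \<in> topspace Y. mY x (iY g) \<in> U}"
  proof
    show "(\<lambda>u. mY u g) ` U \<subseteq> {x \<in> topspace Y. mY x (iY g) \<in> U}"
      using U assms(2) by (auto simp: m_in mr_cancel)
    show "{x \<in> topspace Y. mY x (iY g) \<in> U} \<subseteq> (\<lambda>u. mY u g) ` U"
    proof
      fix x assume "x \<in> {x \<in> topspace Y. mY x (iY g) \<in> U}"
      then have "x \<in> topspace Y" "mY x (iY g) \<in> U" by auto
      moreover have "x = mY (mY x (iY g)) g" using \<open>x \<in> topspace Y\<close> assms(2) by (simp add: mr_cancel2)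
      ultimately show "x \<in> (\<lambda>u. mY u g) ` U" by blast
    qed
  qed
  have "continuous_map Y Y (\<lambda>x. mY x (iY g))"
    by (rule cont_m2) (auto simp: i_in assms(2))
  then show ?thesis unfolding eq using assms(1) by (rule openin_continuous_map_preimage)
qed

lemma mem_transl:
  assumes "U \<subseteq> topspace Y" "w \<in> topspace Y"
  shows "z \<in> (\<lambda>u. mY u w) ` U \<longleftrightarrow> z \<in> topspace Y \<and> mY z (iY w) \<in> U"
proof
  assume "z \<in> (\<lambda>u. mY u w) ` U"
  then obtain u where "u \<in> U" "z = mY u w" by auto
  then show "z \<in> topspace Y \<and> mY z (iY w) \<in> U" using assms by (auto simp: m_in mr_cancel)
next
  assume h: "z \<in> topspace Y \<and> mY z (iY w) \<in> U"
  then have "z = mY (mY z (iY w)) w" using assms by (simp add: mr_cancel2)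
  then show "z \<in> (\<lambda>u. mY u w) ` U" using h by blast
qed

end


locale ov = tgrp Y mY iY eY for Y :: "'b topology" and mY iY eY +
  fixes X :: "'a topology" and p :: "'a \<Rightarrow> 'b" and U :: "'b set" and S :: "'a set set"
  assumes contp: "continuous_map X Y p"
    and surjp: "p ` topspace X = topspace Y"
    and conn: "connected_space X"
    and Uopen: "openin Y U" and eU: "eY \<in> U"
    and ovS: "overlay_structure X Y p S"
    and SU: "(`) p ` S = (\<lambda>y. (\<lambda>u. mY u y) ` U) ` topspace Y"
begin

lemma covS: "covering_structure X Y p S" using ovS by (simp add: overlay_structure_def)

lemma S_open: "V \<in> S \<Longrightarrow> openin X V"
  using covS unfolding covering_structure_def slice_def by blast

lemma S_sub: "V \<in> S \<Longrightarrow> V \<subseteq> topspace X"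
  using S_open openin_subset by blast

lemma S_cover: "x \<in> topspace X \<Longrightarrow> \<exists>V\<in>S. x \<in> V"
  using covS by (auto simp: covering_structure_def)

lemma U_sub: "U \<subseteq> topspace Y" using Uopen openin_subset by blast

lemma p_in: "x \<in> topspace X \<Longrightarrow> p x \<in> topspace Y"
  using surjp by blast

lemma star_in: "x \<in> topspace X \<Longrightarrow> x \<in> star x S"
  using S_cover by (auto simp: star_def)

lemma star_sup: "V \<in> S \<Longrightarrow> x \<in> V \<Longrightarrow> V \<subseteq> star x S"
  by (auto simp: star_def)

lemma star_sub: "star x S \<subseteq> topspace X"
  using S_sub by (auto simp: star_def)

lemma star_open: "openin X (star x S)"
  unfolding star_def by (rule openin_Union) (auto simp: S_open)

lemma slice_homeo:
  assumes "slice X Y p V" shows "homeomorphic_map (subtopology X V) (subtopology Y (p ` V)) p"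
  using assms by (auto simp: slice_def sheet_decomposition_def)

lemma star_inj: "x \<in> topspace X \<Longrightarrow> inj_on p (star x S)"
proof -
  assume x: "x \<in> topspace X"
  then have "slice X Y p (star x S)" using ovS by (simp add: overlay_structure_def)
  then have "inj_on p (topspace (subtopology X (star x S)))"
    using slice_homeo homeomorphic_imp_injective_map by blast
  moreover have "topspace (subtopology X (star x S)) = star x S" using star_sub by auto
  ultimately show ?thesis by simp
qed

lemma star_eq: "x \<in> topspace X \<Longrightarrow> a \<in> star x S \<Longrightarrow> b \<in> star x S \<Longrightarrow> p a = p b \<Longrightarrow> a = b"
  by (rule inj_onD[OF star_inj])

lemma star_eq2: "V \<in> S \<Longrightarrow> x \<in> V \<Longrightarrow> a \<in> V \<Longrightarrow> B \<in> S \<Longrightarrow> x \<in> B \<Longrightarrow> b \<in> B \<Longrightarrow> p a = p b \<Longrightarrow> a = b"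
proof -
  assume h: "V \<in> S" "x \<in> V" "a \<in> V" "B \<in> S" "x \<in> B" "b \<in> B" "p a = p b"
  have x: "x \<in> topspace X" using h S_sub by blast
  have "a \<in> star x S" "b \<in> star x S" using h star_sup by blast+
  then show "a = b" using star_eq[OF x] h by blast
qed

lemma PS_iff: "P \<in> (`) p ` S \<longleftrightarrow> (\<exists>w\<in>topspace Y. P = (\<lambda>u. mY u w) ` U)"
proof -
  have "P \<in> (`) p ` S \<longleftrightarrow> P \<in> (\<lambda>y. (\<lambda>u. mY u y) ` U) ` topspace Y" by (simp only: SU)
  also have "\<dots> \<longleftrightarrow> (\<exists>w\<in>topspace Y. P = (\<lambda>u. mY u w) ` U)" by (rule image_iff)
  finally show ?thesis .
qed

lemma PS_open: "P \<in> (`) p ` S \<Longrightarrow> openin Y P"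
proof -
  assume "P \<in> (`) p ` S"
  then obtain w where "w \<in> topspace Y" "P = (\<lambda>u. mY u w) ` U" unfolding PS_iff by blast
  then show "openin Y P" using right_transl_open[OF Uopen] by simp
qed

lemma sheet_point:
  assumes "P \<in> (`) p ` S" "x \<in> topspace X" "p x \<in> P"
  shows "\<exists>A\<in>S. x \<in> A \<and> p ` A = P"
proof -
  obtain V0 where V0: "V0 \<in> S" "P = p ` V0" using assms(1) by auto
  obtain J where J: "J \<subseteq> S" "sheet_decomposition X Y p V0 J"
    using covS V0(1) by (auto simp: covering_structure_def)
  have "x \<in> \<Union>J" using J(2) assms V0 by (auto simp: sheet_decomposition_def)
  then obtain A where A: "A \<in> J" "x \<in> A" by auto
  have "homeomorphic_map (subtopology X A) (subtopology Y (p ` V0)) p"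
    using J(2) A(1) by (auto simp: sheet_decomposition_def)
  then have "p ` (topspace X \<inter> A) = topspace Y \<inter> p ` V0"
    using homeomorphic_imp_surjective_map by fastforce
  moreover have "topspace X \<inter> A = A" using S_sub A(1) J(1) by blast
  moreover have "topspace Y \<inter> p ` V0 = p ` V0" using S_sub[OF V0(1)] p_in by blast
  ultimately have "p ` A = P" using V0 by simp
  then show ?thesis using A J(1) by blast
qed

lemma ladder_step:
  assumes V: "V \<in> S" "x \<in> V" "x' \<in> V" and B: "B \<in> S" "x \<in> B" "y \<in> B"
    and B': "B' \<in> S" "x' \<in> B'" "y' \<in> B'" and P: "P \<in> (`) p ` S"
    and in_P: "p x \<in> P" "p y \<in> P" "p x' \<in> P" "p y' \<in> P"
  shows "\<exists>A\<in>S. y \<in> A \<and> y' \<in> A"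
proof -
  have x: "x \<in> topspace X" using V S_sub by blast
  obtain A where A: "A \<in> S" "x \<in> A" "p ` A = P" using sheet_point[OF P x in_P(1)] by blast
  have "p x' \<in> p ` A" using A(3) in_P(3) by simp
  then obtain a where a: "a \<in> A" "p a = p x'" unfolding image_iff by metis
  have "a = x'" using star_eq2[OF A(1) A(2) a(1) V(1) V(2) V(3) a(2)] .
  then have x'A: "x' \<in> A" using a by simp
  have "p y \<in> p ` A" using A(3) in_P(2) by simp
  then obtain b where b: "b \<in> A" "p b = p y" unfolding image_iff by metis
  have yA: "y \<in> A" using star_eq2[OF A(1) A(2) b(1) B(1) B(2) B(3) b(2)] b by simp
  have "p y' \<in> p ` A" using A(3) in_P(4) by simp
  then obtain c where c: "c \<in> A" "p c = p y'" unfolding image_iff by metis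
  have y'A: "y' \<in> A" using star_eq2[OF A(1) x'A c(1) B'(1) B'(2) B'(3) c(2)] c by simp
  show ?thesis using A(1) yA y'A by blast
qed

definition islift :: "'a \<Rightarrow> 'b list \<Rightarrow> 'a list \<Rightarrow> bool" where
  "islift x ys xs \<longleftrightarrow> is_chain S xs \<and> set xs \<subseteq> topspace X \<and> map p xs = ys \<and> hd xs = x"

lemma chain_step: "is_chain W xs \<Longrightarrow> Suc i < length xs \<Longrightarrow> \<exists>V\<in>W. xs ! i \<in> V \<and> xs ! Suc i \<in> V"
  unfolding is_chain_def by blast

lemma islift_unique:
  assumes "islift x ys xs" "islift x ys xs'" shows "xs = xs'"
proof -
  have mm: "map p xs = map p xs'" using assms unfolding islift_def by simp
  have len: "length xs = length xs'" using arg_cong[OF mm, of length] by simp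
  have ne: "xs \<noteq> []" using assms unfolding islift_def is_chain_def by blast
  have pp: "\<And>i. i < length xs \<Longrightarrow> p (xs ! i) = p (xs' ! i)"
  proof -
    fix i assume i: "i < length xs"
    have "map p xs ! i = map p xs' ! i" using mm by simp
    then show "p (xs ! i) = p (xs' ! i)" using i len by simp
  qed
  have "\<forall>i. i < length xs \<longrightarrow> xs ! i = xs' ! i"
  proof (intro allI)
    fix i show "i < length xs \<longrightarrow> xs ! i = xs' ! i"
    proof (induction i)
      case 0
      have "hd xs = hd xs'" using assms unfolding islift_def by simp
      then show ?case using ne len by (cases xs; cases xs') auto
    next
      case (Suc i)
      show ?case
      proof
        assume i: "Suc i < length xs"
        then have eq: "xs ! i = xs' ! i" using Suc by simp
        have c1: "is_chain S xs" "is_chain S xs'" using assms unfolding islift_def by simp_all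
        have i': "Suc i < length xs'" using i len by simp
        obtain B where B: "B \<in> S" "xs ! i \<in> B" "xs ! Suc i \<in> B" using chain_step[OF c1(1) i] by blast
        obtain B' where B': "B' \<in> S" "xs' ! i \<in> B'" "xs' ! Suc i \<in> B'" using chain_step[OF c1(2) i'] by blast
        show "xs ! Suc i = xs' ! Suc i"
          using star_eq2[OF B(1) B(2) B(3) B'(1) _ B'(3)] B'(2) eq pp[OF i] by simp
      qed
    qed
  qed
  then show ?thesis using len by (simp add: nth_equalityI)
qed

lemma islift_exists:
  assumes "is_chain ((`) p ` S) ys" "x \<in> topspace X" "p x = hd ys"
  shows "\<exists>xs. islift x ys xs"
  using assms
proof (induction ys arbitrary: x)
  case Nil then show ?case by (simp add: is_chain_def)
next
  case (Cons y ys)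
  show ?case
  proof (cases ys)
    case Nil
    then have "islift x (y # ys) [x]" using Cons.prems by (simp add: islift_def)
    then show ?thesis by blast
  next
    case (Cons y1 l)
    obtain P where P: "P \<in> (`) p ` S" "y \<in> P" "y1 \<in> P"
      using Cons.prems(1) \<open>ys = y1 # l\<close> by (auto simp: is_chain_Cons2)
    obtain A where A: "A \<in> S" "x \<in> A" "p ` A = P"
      using sheet_point[OF P(1) Cons.prems(2)] Cons.prems(3) P(2) by auto
    have "y1 \<in> p ` A" using A(3) P(3) by simp
    then obtain x1 where x1: "x1 \<in> A" "p x1 = y1" unfolding image_iff by metis
    have x1t: "x1 \<in> topspace X" using x1 A S_sub by blast
    have "is_chain ((`) p ` S) ys" using Cons.prems(1) \<open>ys = y1 # l\<close> by (simp add: is_chain_Cons2)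
    then obtain xs1 where xs1: "islift x1 ys xs1" using Cons.IH x1t x1(2) \<open>ys = y1 # l\<close> by auto
    then obtain r where r: "xs1 = x1 # r" unfolding islift_def is_chain_def by (cases xs1) auto
    have "islift x (y # ys) (x # xs1)"
      using xs1 r A x1 Cons.prems unfolding islift_def by (auto simp: is_chain_Cons2)
    then show ?thesis by blast
  qed
qed

definition lift :: "'a \<Rightarrow> 'b list \<Rightarrow> 'a list" where
  "lift x ys = (THE xs. islift x ys xs)"

lemma lift_eq: "islift x ys xs \<Longrightarrow> lift x ys = xs"
  unfolding lift_def using islift_unique by blast

lemma lift_islift:
  assumes "is_chain ((`) p ` S) ys" "x \<in> topspace X" "p x = hd ys"
  shows "islift x ys (lift x ys)"
proof -
  obtain xs where "islift x ys xs" using islift_exists[OF assms] by blast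
  then show ?thesis using lift_eq by simp
qed

lemma islift_last:
  assumes "islift x ys xs" shows "last xs \<in> topspace X" "p (last xs) = last ys" "xs \<noteq> []" "ys \<noteq> []"
proof -
  show ne: "xs \<noteq> []" using assms unfolding islift_def is_chain_def by blast
  then show "last xs \<in> topspace X" using assms unfolding islift_def by auto
  show "p (last xs) = last ys" using assms ne unfolding islift_def by (auto simp: last_map)
  show "ys \<noteq> []" using assms ne unfolding islift_def by auto
qed

lemma islift_append:
  assumes "islift x ys xs" "islift (last xs) zs xs2"
  shows "islift x (ys @ zs) (xs @ xs2)"
proof -
  have ne: "xs \<noteq> []" "xs2 \<noteq> []" using assms unfolding islift_def is_chain_def by blast+
  have lt: "last xs \<in> topspace X" using islift_last(1)[OF assms(1)] .
  then obtain V where "V \<in> S" "last xs \<in> V" using S_cover by blast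
  then have "\<exists>V\<in>S. last xs \<in> V \<and> hd xs2 \<in> V" using assms(2) unfolding islift_def by auto
  then have "is_chain S (xs @ xs2)" using assms is_chain_append unfolding islift_def by blast
  then show ?thesis using assms ne unfolding islift_def by auto
qed

lemma islift_rev:
  assumes "islift x ys xs" shows "islift (last xs) (rev ys) (rev xs)"
  using assms is_chain_rev unfolding islift_def by (auto simp: hd_rev rev_map)

end


context ov begin

lemma ladder:
  assumes c: "is_chain S xs" "is_chain S xs'" and st: "set xs \<subseteq> topspace X" "set xs' \<subseteq> topspace X"
    and len: "length xs' = length xs" and h0: "\<exists>V\<in>S. hd xs \<in> V \<and> hd xs' \<in> V"
    and L: "\<And>i. Suc i < length xs \<Longrightarrow> \<exists>P\<in>(`) p ` S. p (xs!i) \<in> P \<and> p (xs!Suc i) \<in> P \<and> p (xs'!i) \<in> P \<and> p (xs'!Suc i) \<in> P"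
  shows "\<exists>V\<in>S. last xs \<in> V \<and> last xs' \<in> V"
proof -
  have ne: "xs \<noteq> []" "xs' \<noteq> []" using c unfolding is_chain_def by auto
  have all: "\<forall>i. i < length xs \<longrightarrow> (\<exists>V\<in>S. xs!i \<in> V \<and> xs'!i \<in> V)"
  proof
    fix i show "i < length xs \<longrightarrow> (\<exists>V\<in>S. xs!i \<in> V \<and> xs'!i \<in> V)"
    proof (induction i)
      case 0
      have "hd xs = xs ! 0" "hd xs' = xs' ! 0" using ne by (simp_all add: hd_conv_nth)
      then show ?case using h0 by simp
    next
      case (Suc i)
      show ?case
      proof
        assume i: "Suc i < length xs"
        then obtain V where V: "V \<in> S" "xs!i \<in> V" "xs'!i \<in> V" using Suc by auto
        have i': "Suc i < length xs'" using i len by simp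
        obtain B where B: "B \<in> S" "xs ! i \<in> B" "xs ! Suc i \<in> B" using chain_step[OF c(1) i] by blast
        obtain B' where B': "B' \<in> S" "xs' ! i \<in> B'" "xs' ! Suc i \<in> B'" using chain_step[OF c(2) i'] by blast
        obtain P where P: "P \<in> (`) p ` S" "p (xs!i) \<in> P" "p (xs!Suc i) \<in> P" "p (xs'!i) \<in> P" "p (xs'!Suc i) \<in> P"
          using L[OF i] by blast
        show "\<exists>V\<in>S. xs ! Suc i \<in> V \<and> xs' ! Suc i \<in> V"
          by (rule ladder_step[OF V B B' P])
      qed
    qed
  qed
  have "last xs = xs ! (length xs - 1)" "last xs' = xs' ! (length xs - 1)" using ne len by (simp_all add: last_conv_nth)
  moreover have "length xs - 1 < length xs" using ne by simp
  ultimately show ?thesis using all by metis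
qed

definition tr :: "'b \<Rightarrow> 'b list \<Rightarrow> 'b list" where
  "tr g ys = map (\<lambda>y. mY y g) ys"

lemma transl_mem:
  assumes "w \<in> topspace Y" "g \<in> topspace Y" "y \<in> (\<lambda>u. mY u w) ` U"
  shows "mY y g \<in> (\<lambda>u. mY u (mY w g)) ` U"
proof -
  obtain u where u: "u \<in> U" "y = mY u w" using assms(3) by blast
  have "mY y g = mY u (mY w g)" using u assms U_sub by (auto simp: assoc)
  then show ?thesis using u(1) by blast
qed

lemma chain_tr:
  assumes "is_chain ((`) p ` S) ys" "g \<in> topspace Y"
  shows "is_chain ((`) p ` S) (tr g ys)"
  unfolding is_chain_def
proof (intro conjI allI impI)
  show "tr g ys \<noteq> []" using assms unfolding is_chain_def tr_def by simp
  fix i assume i: "Suc i < length (tr g ys)"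
  then have i': "Suc i < length ys" unfolding tr_def by simp
  obtain P where P: "P \<in> (`) p ` S" "ys ! i \<in> P" "ys ! Suc i \<in> P" using chain_step[OF assms(1) i'] by blast
  obtain w where w: "w \<in> topspace Y" "P = (\<lambda>u. mY u w) ` U" using P(1) unfolding PS_iff by blast
  have "(\<lambda>u. mY u (mY w g)) ` U \<in> (`) p ` S" unfolding PS_iff using w(1) assms(2) m_in by blast
  moreover have "tr g ys ! i \<in> (\<lambda>u. mY u (mY w g)) ` U" "tr g ys ! Suc i \<in> (\<lambda>u. mY u (mY w g)) ` U"
    using transl_mem[OF w(1) assms(2)] P w(2) i' unfolding tr_def by auto
  ultimately show "\<exists>V\<in>(`) p ` S. tr g ys ! i \<in> V \<and> tr g ys ! Suc i \<in> V" by blast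
qed

lemma Nset:
  assumes w: "w \<in> topspace Y" and y: "y \<in> (\<lambda>u. mY u w) ` U"
  shows "openin Y {k \<in> topspace Y. mY (mY y k) (iY w) \<in> U}"
    "eY \<in> {k \<in> topspace Y. mY (mY y k) (iY w) \<in> U}"
    "\<And>k. k \<in> {k \<in> topspace Y. mY (mY y k) (iY w) \<in> U} \<Longrightarrow> mY y k \<in> (\<lambda>u. mY u w) ` U"
proof -
  have yt: "y \<in> topspace Y \<and> mY y (iY w) \<in> U" using mem_transl[OF U_sub w] y by blast
  have "continuous_map Y Y (\<lambda>k. mY (mY y k) (iY w))"
    by (intro cont_m2 cont_const) (auto simp: yt i_in w)
  then show "openin Y {k \<in> topspace Y. mY (mY y k) (iY w) \<in> U}"
    using Uopen by (rule openin_continuous_map_preimage)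
  show "eY \<in> {k \<in> topspace Y. mY (mY y k) (iY w) \<in> U}" using yt by (simp add: e_in rid)
  fix k assume "k \<in> {k \<in> topspace Y. mY (mY y k) (iY w) \<in> U}"
  then show "mY y k \<in> (\<lambda>u. mY u w) ` U" using mem_transl[OF U_sub w] yt by (simp add: m_in)
qed

lemma tW:
  assumes "is_chain ((`) p ` S) ys"
  shows "\<exists>W. openin Y W \<and> eY \<in> W \<and> (\<forall>k\<in>W. \<forall>i. Suc i < length ys \<longrightarrow>
      (\<exists>P\<in>(`) p ` S. ys!i \<in> P \<and> ys!Suc i \<in> P \<and> mY (ys!i) k \<in> P \<and> mY (ys!Suc i) k \<in> P))"
  using assms
proof (induction ys)
  case Nil then show ?case by (simp add: is_chain_def)
next
  case (Cons y ys)
  show ?case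
  proof (cases ys)
    case Nil
    then show ?thesis using e_in by auto
  next
    case (Cons y1 l)
    obtain P where P: "P \<in> (`) p ` S" "y \<in> P" "y1 \<in> P"
      using Cons.prems \<open>ys = y1 # l\<close> by (auto simp: is_chain_Cons2)
    obtain w where w: "w \<in> topspace Y" "P = (\<lambda>u. mY u w) ` U" using P(1) unfolding PS_iff by blast
    have "is_chain ((`) p ` S) ys" using Cons.prems \<open>ys = y1 # l\<close> by (simp add: is_chain_Cons2)
    then obtain W' where W': "openin Y W'" "eY \<in> W'" "\<forall>k\<in>W'. \<forall>i. Suc i < length ys \<longrightarrow>
      (\<exists>P\<in>(`) p ` S. ys!i \<in> P \<and> ys!Suc i \<in> P \<and> mY (ys!i) k \<in> P \<and> mY (ys!Suc i) k \<in> P)"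
      using Cons.IH by blast
    define N1 where "N1 = {k \<in> topspace Y. mY (mY y k) (iY w) \<in> U}"
    define N2 where "N2 = {k \<in> topspace Y. mY (mY y1 k) (iY w) \<in> U}"
    have y: "y \<in> (\<lambda>u. mY u w) ` U" and y1: "y1 \<in> (\<lambda>u. mY u w) ` U" using P w by auto
    note n1 = Nset[OF w(1) y, folded N1_def] and n2 = Nset[OF w(1) y1, folded N2_def]
    define W where "W = W' \<inter> N1 \<inter> N2"
    have "openin Y W" unfolding W_def using W'(1) n1(1) n2(1) by auto
    moreover have "eY \<in> W" unfolding W_def using W'(2) n1(2) n2(2) by auto
    moreover have "\<forall>k\<in>W. \<forall>i. Suc i < length (y # ys) \<longrightarrow>
      (\<exists>P\<in>(`) p ` S. (y#ys)!i \<in> P \<and> (y#ys)!Suc i \<in> P \<and> mY ((y#ys)!i) k \<in> P \<and> mY ((y#ys)!Suc i) k \<in> P)"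
    proof (intro ballI allI impI)
      fix k i assume k: "k \<in> W" and i: "Suc i < length (y # ys)"
      show "\<exists>P\<in>(`) p ` S. (y#ys)!i \<in> P \<and> (y#ys)!Suc i \<in> P \<and> mY ((y#ys)!i) k \<in> P \<and> mY ((y#ys)!Suc i) k \<in> P"
      proof (cases i)
        case 0
        have "mY y k \<in> P" "mY y1 k \<in> P" using k n1(3) n2(3) w(2) unfolding W_def by auto
        then show ?thesis using 0 P \<open>ys = y1 # l\<close> by auto
      next
        case (Suc j)
        then have "Suc j < length ys" using i by simp
        then show ?thesis using W'(3) k Suc unfolding W_def by auto
      qed
    qed
    ultimately show ?thesis by blast
  qed
qed

lemma conn_prop:
  assumes loc: "\<And>a. a \<in> topspace X \<Longrightarrow> \<exists>N. openin X N \<and> a \<in> N \<and> (\<forall>a'\<in>N. Q a' \<longleftrightarrow> Q a)"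
    and e: "e \<in> topspace X" "Q e"
  shows "\<forall>a\<in>topspace X. Q a"
proof -
  define T where "T = {a \<in> topspace X. Q a}"
  have o1: "openin X T"
  proof (subst openin_subopen, intro ballI)
    fix a assume a: "a \<in> T"
    then obtain N where N: "openin X N" "a \<in> N" "\<forall>a'\<in>N. Q a' \<longleftrightarrow> Q a" using loc unfolding T_def by blast
    have Nt: "N \<subseteq> topspace X" using openin_subset[OF N(1)] .
    have Qa: "Q a" using a unfolding T_def by simp
    have "N \<subseteq> T"
    proof
      fix a' assume a': "a' \<in> N"
      then have "Q a'" using N(3) Qa by blast
      then show "a' \<in> T" using a' Nt unfolding T_def by blast
    qed
    then show "\<exists>T'. openin X T' \<and> a \<in> T' \<and> T' \<subseteq> T" using N by blast
  qed
  have o2: "openin X (topspace X - T)"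
  proof (subst openin_subopen, intro ballI)
    fix a assume a: "a \<in> topspace X - T"
    then obtain N where N: "openin X N" "a \<in> N" "\<forall>a'\<in>N. Q a' \<longleftrightarrow> Q a" using loc by blast
    have Nt: "N \<subseteq> topspace X" using openin_subset[OF N(1)] .
    have Qa: "\<not> Q a" using a unfolding T_def by simp
    have "N \<subseteq> topspace X - T"
    proof
      fix a' assume a': "a' \<in> N"
      then have "\<not> Q a'" using N(3) Qa by blast
      then show "a' \<in> topspace X - T" using a' Nt unfolding T_def by blast
    qed
    then show "\<exists>T'. openin X T' \<and> a \<in> T' \<and> T' \<subseteq> topspace X - T" using N by blast
  qed
  have "closedin X T" unfolding closedin_def using o2 T_def by auto
  then have "T = {} \<or> T = topspace X" using o1 conn connected_space_clopen_in by blast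
  moreover have "e \<in> T" using e T_def by simp
  ultimately show ?thesis unfolding T_def by auto
qed

definition e0 :: 'a where "e0 = (SOME x. x \<in> topspace X \<and> p x = eY)"

lemma e0: "e0 \<in> topspace X" "p e0 = eY"
proof -
  have "\<exists>x. x \<in> topspace X \<and> p x = eY" using surjp e_in by (metis imageE)
  then have "e0 \<in> topspace X \<and> p e0 = eY" unfolding e0_def by (rule someI_ex)
  then show "e0 \<in> topspace X" "p e0 = eY" by auto
qed

definition reach :: "'a \<Rightarrow> 'a list \<Rightarrow> bool" where
  "reach a c \<longleftrightarrow> is_chain S c \<and> set c \<subseteq> topspace X \<and> hd c = e0 \<and> last c = a"

lemma reach_snoc:
  assumes "reach a c" "V \<in> S" "a \<in> V" "a' \<in> V"
  shows "reach a' (c @ [a'])"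
proof -
  have "is_chain S (c @ [a'])" using assms is_chain_append[of S c "[a']"] unfolding reach_def by auto
  moreover have "c \<noteq> []" using assms unfolding reach_def is_chain_def by auto
  ultimately show ?thesis using assms S_sub unfolding reach_def by auto
qed

lemma reach_ex: "a \<in> topspace X \<Longrightarrow> \<exists>c. reach a c"
proof -
  have "\<forall>a\<in>topspace X. \<exists>c. reach a c"
  proof (rule conn_prop[OF _ e0(1)])
    fix a assume a: "a \<in> topspace X"
    then obtain V where V: "V \<in> S" "a \<in> V" using S_cover by blast
    have "\<forall>a'\<in>V. (\<exists>c. reach a' c) \<longleftrightarrow> (\<exists>c. reach a c)"
      using reach_snoc V by blast
    then show "\<exists>N. openin X N \<and> a \<in> N \<and> (\<forall>a'\<in>N. (\<exists>c. reach a' c) \<longleftrightarrow> (\<exists>c. reach a c))"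
      using V S_open by blast
  next
    have "reach e0 [e0]" using e0 unfolding reach_def by simp
    then show "\<exists>c. reach e0 c" by blast
  qed
  then show "a \<in> topspace X \<Longrightarrow> \<exists>c. reach a c" by blast
qed

lemma reach_chain: "reach a c \<Longrightarrow> is_chain ((`) p ` S) (map p c)"
  unfolding reach_def by (simp add: is_chain_map)

lemma reach_props: "reach a c \<Longrightarrow> c \<noteq> [] \<and> a \<in> topspace X \<and> hd (map p c) = eY \<and> last (map p c) = p a"
  unfolding reach_def is_chain_def using e0 by (auto simp: hd_map last_map)

end


context ov begin

lemma tr_simps:
  "length (tr g ys) = length ys"
  "i < length ys \<Longrightarrow> tr g ys ! i = mY (ys ! i) g"
  "tr g (ys @ zs) = tr g ys @ tr g zs"
  "rev (tr g ys) = tr g (rev ys)"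
  "ys \<noteq> [] \<Longrightarrow> hd (tr g ys) = mY (hd ys) g"
  "ys \<noteq> [] \<Longrightarrow> last (tr g ys) = mY (last ys) g"
  "tr g ys = [] \<longleftrightarrow> ys = []"
  unfolding tr_def by (simp_all add: rev_map hd_map last_map)

lemma tr_e: "set ys \<subseteq> topspace Y \<Longrightarrow> tr eY ys = ys"
  unfolding tr_def by (induction ys) (auto simp: rid)

lemma tr_tr: "set ys \<subseteq> topspace Y \<Longrightarrow> g \<in> topspace Y \<Longrightarrow> h \<in> topspace Y \<Longrightarrow> tr h (tr g ys) = tr (mY g h) ys"
  unfolding tr_def by (induction ys) (auto simp: assoc)

lemma reach_set: "reach a c \<Longrightarrow> set (map p c) \<subseteq> topspace Y"
  unfolding reach_def using p_in by auto

definition act :: "'a \<Rightarrow> 'a list \<Rightarrow> 'a" where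
  "act b c = last (lift b (tr (p b) (map p c)))"

lemma act_lift:
  assumes "reach a c" "b \<in> topspace X"
  shows "islift b (tr (p b) (map p c)) (lift b (tr (p b) (map p c)))"
proof (rule lift_islift)
  show "is_chain ((`) p ` S) (tr (p b) (map p c))" using chain_tr[OF reach_chain[OF assms(1)]] p_in assms(2) by simp
  show "b \<in> topspace X" by fact
  have "map p c \<noteq> []" "hd (map p c) = eY" using reach_props[OF assms(1)] by auto
  then show "p b = hd (tr (p b) (map p c))" using tr_simps(5) lid p_in assms(2) by simp
qed

lemma act_props:
  assumes "reach a c" "b \<in> topspace X"
  shows "act b c \<in> topspace X" "p (act b c) = mY (p a) (p b)"
proof -
  note L = act_lift[OF assms]
  show "act b c \<in> topspace X" using islift_last(1)[OF L] unfolding act_def .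
  have "map p c \<noteq> []" "last (map p c) = p a" using reach_props[OF assms(1)] by auto
  then show "p (act b c) = mY (p a) (p b)" using islift_last(2)[OF L] tr_simps(6) unfolding act_def by simp
qed

lemma loop:
  assumes l: "reach e0 l" and b: "b \<in> topspace X"
  shows "act b l = b"
proof -
  have "\<forall>b\<in>topspace X. act b l = b"
  proof (rule conn_prop[OF _ e0(1)])
    have "islift e0 (map p l) l" using l unfolding reach_def islift_def by simp
    moreover have "tr (p e0) (map p l) = map p l" using e0(2) tr_e reach_set[OF l] by simp
    ultimately have "lift e0 (tr (p e0) (map p l)) = l" using lift_eq by simp
    then show "act e0 l = e0" using l unfolding act_def reach_def by simp
  next
    fix b assume b: "b \<in> topspace X"
    define ys where "ys = tr (p b) (map p l)"
    have pb: "p b \<in> topspace Y" using p_in b by simp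
    have ysc: "is_chain ((`) p ` S) ys" unfolding ys_def using chain_tr[OF reach_chain[OF l] pb] .
    obtain W where W: "openin Y W" "eY \<in> W" "\<forall>k\<in>W. \<forall>i. Suc i < length ys \<longrightarrow>
      (\<exists>P\<in>(`) p ` S. ys!i \<in> P \<and> ys!Suc i \<in> P \<and> mY (ys!i) k \<in> P \<and> mY (ys!Suc i) k \<in> P)"
      using tW[OF ysc] by blast
    obtain V where V: "V \<in> S" "b \<in> V" using S_cover b by blast
    define N where "N = V \<inter> {b' \<in> topspace X. mY (iY (p b)) (p b') \<in> W}"
    have "continuous_map X Y (\<lambda>b'. mY (iY (p b)) (p b'))"
      by (intro cont_m2 cont_const contp) (simp add: i_in pb)
    then have "openin X {b' \<in> topspace X. mY (iY (p b)) (p b') \<in> W}"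
      using W(1) by (rule openin_continuous_map_preimage)
    then have "openin X N" unfolding N_def using S_open[OF V(1)] by auto
    moreover have "b \<in> N" unfolding N_def using V b W(2) by (simp add: linv pb)
    moreover have "\<forall>b'\<in>N. act b' l = b' \<longleftrightarrow> act b l = b"
    proof
      fix b' assume b'N: "b' \<in> N"
      then have b': "b' \<in> topspace X" "b' \<in> V" and kW: "mY (iY (p b)) (p b') \<in> W" unfolding N_def by auto
      define k where "k = mY (iY (p b)) (p b')"
      have pb': "p b' \<in> topspace Y" using p_in b' by simp
      define xs where "xs = lift b ys"
      define xs' where "xs' = lift b' (tr (p b') (map p l))"
      have Lx: "islift b ys xs" unfolding xs_def ys_def using act_lift[OF l b] .
      have Lx': "islift b' (tr (p b') (map p l)) xs'" unfolding xs'_def using act_lift[OF l b'(1)] .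
      have lenxs: "length xs = length l" using Lx unfolding islift_def ys_def by (metis length_map tr_simps(1))
      have lenxs': "length xs' = length l" using Lx' unfolding islift_def by (metis length_map tr_simps(1))
      have pxs: "\<And>i. i < length l \<Longrightarrow> p (xs ! i) = ys ! i"
        using Lx lenxs unfolding islift_def by (metis nth_map)
      have pxs': "\<And>i. i < length l \<Longrightarrow> p (xs' ! i) = mY (ys ! i) k"
      proof -
        fix i assume i: "i < length l"
        have "p (xs' ! i) = tr (p b') (map p l) ! i" using Lx' lenxs' i unfolding islift_def by (metis nth_map)
        also have "\<dots> = mY (p (l ! i)) (p b')" using i by (simp add: tr_simps(2))
        also have "\<dots> = mY (mY (p (l ! i)) (p b)) k"
        proof -
          have "l ! i \<in> topspace X" using l i unfolding reach_def by (meson nth_mem subsetD)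
          then have "p (l ! i) \<in> topspace Y" by (rule p_in)
          then show ?thesis using shift_cancel[of "p (l!i)" "p b" "p b'"] pb pb' k_def by simp
        qed
        also have "\<dots> = mY (ys ! i) k" unfolding ys_def using i by (simp add: tr_simps(2))
        finally show "p (xs' ! i) = mY (ys ! i) k" .
      qed
      have lenys: "length ys = length l" unfolding ys_def by (simp add: tr_simps(1))
      have "\<exists>A\<in>S. last xs \<in> A \<and> last xs' \<in> A"
      proof (rule ladder)
        show "is_chain S xs" "is_chain S xs'" "set xs \<subseteq> topspace X" "set xs' \<subseteq> topspace X"
          using Lx Lx' unfolding islift_def by auto
        show "length xs' = length xs" using lenxs lenxs' by simp
        have "hd xs = b" "hd xs' = b'" using Lx Lx' unfolding islift_def by auto
        then show "\<exists>V\<in>S. hd xs \<in> V \<and> hd xs' \<in> V" using V b' by blast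
        fix i assume i: "Suc i < length xs"
        then have i2: "Suc i < length ys" using lenxs lenys by simp
        have "k \<in> W" using kW k_def by simp
        then obtain P where "P \<in> (`) p ` S" "ys!i \<in> P" "ys!Suc i \<in> P" "mY (ys!i) k \<in> P" "mY (ys!Suc i) k \<in> P"
          using W(3)[rule_format, OF _ i2] by meson
        then show "\<exists>P\<in>(`) p ` S. p (xs!i) \<in> P \<and> p (xs!Suc i) \<in> P \<and> p (xs'!i) \<in> P \<and> p (xs'!Suc i) \<in> P"
          using pxs pxs' i lenxs by auto
      qed
      then obtain A where A: "A \<in> S" "last xs \<in> A" "last xs' \<in> A" by blast
      have px: "p (last xs) = p b" using act_props(2)[OF l b] e0(2) lid pb unfolding act_def xs_def ys_def by simp
      have px': "p (last xs') = p b'" using act_props(2)[OF l b'(1)] e0(2) lid pb' unfolding act_def xs'_def by simp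
      have ax: "act b l = last xs" "act b' l = last xs'" unfolding act_def xs_def xs'_def ys_def by simp_all
      show "act b' l = b' \<longleftrightarrow> act b l = b"
      proof
        assume "act b' l = b'"
        then have "last xs' = b'" using ax by simp
        then show "act b l = b" using star_eq2[OF V(1) b'(2) V(2) A(1) _ A(2)] A(3) px ax by simp
      next
        assume "act b l = b"
        then have "last xs = b" using ax by simp
        then show "act b' l = b'" using star_eq2[OF V(1) V(2) b'(2) A(1) _ A(3)] A(2) px' ax by simp
      qed
    qed
    ultimately show "\<exists>N. openin X N \<and> b \<in> N \<and> (\<forall>b'\<in>N. act b' l = b' \<longleftrightarrow> act b l = b)" by blast
  qed
  then show ?thesis using b by blast
qed

end


context ov begin

lemma reach_rev_chain: "reach a c \<Longrightarrow> is_chain ((`) p ` S) (map p (rev c))"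
  using is_chain_rev[OF reach_chain] by (simp add: rev_map)

lemma act_welldef:
  assumes c: "reach a c" and c': "reach a c'" and b: "b \<in> topspace X"
  shows "act b c = act b c'"
proof -
  have pb: "p b \<in> topspace Y" using p_in b by simp
  have ne: "c \<noteq> []" "c' \<noteq> []" and a: "a \<in> topspace X" using reach_props c c' by auto
  define l where "l = c @ rev c'"
  have "reach e0 l"
  proof -
    obtain V where "V \<in> S" "a \<in> V" using S_cover a by blast
    then have "\<exists>V\<in>S. last c \<in> V \<and> hd (rev c') \<in> V" using c c' ne unfolding reach_def by (auto simp: hd_rev)
    then have "is_chain S l" unfolding l_def using is_chain_append is_chain_rev c c' unfolding reach_def by blast
    then show ?thesis using c c' ne unfolding reach_def l_def by (auto simp: last_rev)
  qed
  note Ll = loop[OF this b]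
  define L1 where "L1 = lift b (tr (p b) (map p c))"
  have I1: "islift b (tr (p b) (map p c)) L1" unfolding L1_def using act_lift[OF c b] .
  define q where "q = last L1"
  have q: "q \<in> topspace X" "p q = mY (p a) (p b)" using act_props[OF c b] unfolding q_def L1_def act_def by auto
  define ys2 where "ys2 = tr (p b) (map p (rev c'))"
  have ch2: "is_chain ((`) p ` S) ys2" unfolding ys2_def using chain_tr[OF reach_rev_chain[OF c'] pb] .
  have "hd ys2 = mY (p a) (p b)" unfolding ys2_def using ne c' unfolding reach_def
    by (simp add: tr_simps(5) hd_map hd_rev)
  then have I2: "islift q ys2 (lift q ys2)" using lift_islift[OF ch2 q(1)] q(2) by simp
  define L2 where "L2 = lift q ys2"
  have "islift b (tr (p b) (map p c) @ ys2) (L1 @ L2)"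
    using islift_append[OF I1] I2 unfolding q_def L2_def by simp
  moreover have "tr (p b) (map p c) @ ys2 = tr (p b) (map p l)" unfolding ys2_def l_def by (simp add: tr_simps(3))
  ultimately have "lift b (tr (p b) (map p l)) = L1 @ L2" using lift_eq by simp
  moreover have "L2 \<noteq> []" using islift_last(3)[OF I2] unfolding L2_def .
  ultimately have lastL2: "last L2 = b" using Ll unfolding act_def by simp
  have "islift (last L2) (rev ys2) (rev L2)" using islift_rev I2 unfolding L2_def by blast
  moreover have "rev ys2 = tr (p b) (map p c')" unfolding ys2_def by (simp add: tr_simps(4) rev_map)
  ultimately have "lift b (tr (p b) (map p c')) = rev L2" using lastL2 lift_eq by simp
  then have "act b c' = hd L2" unfolding act_def using \<open>L2 \<noteq> []\<close> by (simp add: last_rev)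
  also have "hd L2 = q" using I2 unfolding L2_def islift_def by simp
  finally show ?thesis unfolding q_def L1_def act_def by simp
qed

definition M :: "'a \<Rightarrow> 'a \<Rightarrow> 'a" where
  "M a b = act b (SOME c. reach a c)"

lemma M_eq: "reach a c \<Longrightarrow> b \<in> topspace X \<Longrightarrow> M a b = act b c"
proof -
  assume c: "reach a c" and b: "b \<in> topspace X"
  then have "reach a (SOME c. reach a c)" by (meson someI_ex)
  then show "M a b = act b c" unfolding M_def using act_welldef c b by blast
qed

lemma M_props:
  assumes "a \<in> topspace X" "b \<in> topspace X"
  shows "M a b \<in> topspace X" "p (M a b) = mY (p a) (p b)"
proof -
  obtain c where c: "reach a c" using reach_ex assms(1) by blast
  show "M a b \<in> topspace X" "p (M a b) = mY (p a) (p b)"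
    using M_eq[OF c assms(2)] act_props[OF c assms(2)] by simp_all
qed

lemma M_assoc:
  assumes a: "a \<in> topspace X" and b: "b \<in> topspace X" and d: "d \<in> topspace X"
  shows "M (M a b) d = M a (M b d)"
proof -
  obtain ca where ca: "reach a ca" using reach_ex a by blast
  obtain cb where cb: "reach b cb" using reach_ex b by blast
  have pb: "p b \<in> topspace Y" and pd: "p d \<in> topspace Y" using p_in b d by auto
  define C where "C = lift b (tr (p b) (map p ca))"
  have IC: "islift b (tr (p b) (map p ca)) C" unfolding C_def using act_lift[OF ca b] .
  have MC: "M a b = last C" using M_eq[OF ca b] unfolding act_def C_def by simp
  have "reach (M a b) (cb @ C)"
  proof -
    have ne: "cb \<noteq> []" "C \<noteq> []" using reach_props[OF cb] islift_last(3)[OF IC] by auto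
    obtain V where "V \<in> S" "b \<in> V" using S_cover b by blast
    then have "\<exists>V\<in>S. last cb \<in> V \<and> hd C \<in> V" using cb IC unfolding reach_def islift_def by auto
    then have "is_chain S (cb @ C)" using is_chain_append cb IC unfolding reach_def islift_def by blast
    then show ?thesis using cb IC ne MC unfolding reach_def islift_def by auto
  qed
  then have "M (M a b) d = act d (cb @ C)" using M_eq d by blast
  also have "\<dots> = last (lift d (tr (p d) (map p cb) @ tr (p d) (map p C)))"
    unfolding act_def by (simp add: tr_simps(3))
  finally have e1: "M (M a b) d = last (lift d (tr (p d) (map p cb) @ tr (p d) (map p C)))" .
  define D1 where "D1 = lift d (tr (p d) (map p cb))"
  have ID1: "islift d (tr (p d) (map p cb)) D1" unfolding D1_def using act_lift[OF cb d] .
  define r where "r = last D1"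
  have Mr: "M b d = r" using M_eq[OF cb d] unfolding act_def D1_def r_def by simp
  have r: "r \<in> topspace X" "p r = mY (p b) (p d)" using M_props[OF b d] Mr by auto
  have "map p C = tr (p b) (map p ca)" using IC unfolding islift_def by simp
  then have "tr (p d) (map p C) = tr (p r) (map p ca)" using tr_tr[OF reach_set[OF ca] pb pd] r by simp
  moreover have ID2: "islift r (tr (p r) (map p ca)) (lift r (tr (p r) (map p ca)))" using act_lift[OF ca r(1)] .
  ultimately have "islift d (tr (p d) (map p cb) @ tr (p d) (map p C)) (D1 @ lift r (tr (p r) (map p ca)))"
    using islift_append[OF ID1] unfolding r_def by simp
  then have "M (M a b) d = last (D1 @ lift r (tr (p r) (map p ca)))" using e1 lift_eq by simp
  also have "\<dots> = last (lift r (tr (p r) (map p ca)))" using islift_last(3)[OF ID2] by simp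
  also have "\<dots> = M a r" using M_eq[OF ca r(1)] unfolding act_def by simp
  finally show ?thesis using Mr by simp
qed

lemma M_lid: "b \<in> topspace X \<Longrightarrow> M e0 b = b"
proof -
  assume b: "b \<in> topspace X"
  have "reach e0 [e0]" using e0 unfolding reach_def by simp
  then have "M e0 b = act b [e0]" using M_eq b by blast
  moreover have "tr (p b) (map p [e0]) = [p b]" using e0 lid p_in b unfolding tr_def by simp
  moreover have "islift b [p b] [b]" using b unfolding islift_def by simp
  ultimately show ?thesis unfolding act_def using lift_eq by simp
qed

lemma M_rid: "a \<in> topspace X \<Longrightarrow> M a e0 = a"
proof -
  assume a: "a \<in> topspace X"
  obtain c where c: "reach a c" using reach_ex a by blast
  have "M a e0 = act e0 c" using M_eq c e0 by blast
  moreover have "tr (p e0) (map p c) = map p c" using e0 tr_e reach_set[OF c] by simp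
  moreover have "islift e0 (map p c) c" using c unfolding reach_def islift_def by simp
  ultimately show ?thesis unfolding act_def using lift_eq c unfolding reach_def by simp
qed

definition inv_of :: "'a list \<Rightarrow> 'a \<Rightarrow> 'a" where
  "inv_of c a = last (lift e0 (tr (iY (p a)) (map p (rev c))))"

lemma inv_of_props:
  assumes c: "reach a c"
  shows "inv_of c a \<in> topspace X" "p (inv_of c a) = iY (p a)" "M a (inv_of c a) = e0"
proof -
  have a: "a \<in> topspace X" and ne: "c \<noteq> []" using reach_props[OF c] by auto
  have pa: "p a \<in> topspace Y" using p_in a by simp
  define ys where "ys = tr (iY (p a)) (map p (rev c))"
  have ch: "is_chain ((`) p ` S) ys" unfolding ys_def using chain_tr[OF reach_rev_chain[OF c]] i_in pa by simp
  have "hd ys = mY (p a) (iY (p a))" unfolding ys_def using ne c unfolding reach_def by (simp add: tr_simps(5) hd_map hd_rev)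
  then have "p e0 = hd ys" using e0 rinv pa by simp
  note IB = lift_islift[OF ch e0(1) this]
  define B where "B = lift e0 ys"
  show b: "inv_of c a \<in> topspace X" using islift_last(1)[OF IB] unfolding inv_of_def ys_def by simp
  have "last ys = mY eY (iY (p a))" unfolding ys_def using ne c e0 unfolding reach_def by (simp add: tr_simps(6) last_map last_rev)
  then show pb: "p (inv_of c a) = iY (p a)" using islift_last(2)[OF IB] lid i_in pa unfolding inv_of_def ys_def by simp
  have "islift (last B) (rev ys) (rev B)" using islift_rev IB unfolding B_def by blast
  moreover have "rev ys = tr (p (inv_of c a)) (map p c)" unfolding ys_def using pb by (simp add: tr_simps(4) rev_map)
  moreover have "last B = inv_of c a" unfolding B_def inv_of_def ys_def by simp
  ultimately have "lift (inv_of c a) (tr (p (inv_of c a)) (map p c)) = rev B" using lift_eq by simp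
  then have "M a (inv_of c a) = last (rev B)" using M_eq[OF c b] unfolding act_def by simp
  also have "\<dots> = hd B" using islift_last(3)[OF IB] unfolding B_def by (simp add: last_rev)
  also have "\<dots> = e0" using IB unfolding B_def islift_def by simp
  finally show "M a (inv_of c a) = e0" .
qed

definition I :: "'a \<Rightarrow> 'a" where "I a = inv_of (SOME c. reach a c) a"

lemma I_props:
  assumes a: "a \<in> topspace X"
  shows "I a \<in> topspace X" "p (I a) = iY (p a)" "M a (I a) = e0"
proof -
  have "reach a (SOME c. reach a c)" using reach_ex[OF a] by (meson someI_ex)
  then show "I a \<in> topspace X" "p (I a) = iY (p a)" "M a (I a) = e0" unfolding I_def using inv_of_props by auto
qed

lemma M_linv:
  assumes a: "a \<in> topspace X" shows "M (I a) a = e0"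
proof -
  define y where "y = I a"
  define z where "z = I y"
  have y: "y \<in> topspace X" "M a y = e0" using I_props[OF a] y_def by auto
  have z: "z \<in> topspace X" "M y z = e0" using I_props[OF y(1)] z_def by auto
  have ya: "M y a \<in> topspace X" using M_props y a by blast
  have "M y a = M (M y a) e0" using M_rid[OF ya] by simp
  also have "\<dots> = M (M y a) (M y z)" using z by simp
  also have "\<dots> = M y (M a (M y z))" by (rule M_assoc[OF y(1) a M_props(1)[OF y(1) z(1)]])
  also have "\<dots> = M y (M (M a y) z)" by (simp only: M_assoc[OF a y(1) z(1)])
  also have "\<dots> = M y z" using y M_lid z by simp
  also have "\<dots> = e0" using z by simp
  finally show ?thesis unfolding y_def .
qed

lemma inv_unique: "a \<in> topspace X \<Longrightarrow> b \<in> topspace X \<Longrightarrow> M a b = e0 \<Longrightarrow> b = I a"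
proof -
  assume a: "a \<in> topspace X" and b: "b \<in> topspace X" and ab: "M a b = e0"
  have "b = M e0 b" using M_lid b by simp
  also have "\<dots> = M (M (I a) a) b" using M_linv a by simp
  also have "\<dots> = M (I a) (M a b)" using M_assoc I_props a b by simp
  also have "\<dots> = I a" using ab M_rid I_props a by simp
  finally show ?thesis .
qed

end


context ov begin

lemma p_open: assumes Op: "openin X Op" shows "openin Y (p ` Op)"
proof -
  have "p ` Op = (\<Union>V\<in>S. p ` (Op \<inter> V))"
  proof
    show "p ` Op \<subseteq> (\<Union>V\<in>S. p ` (Op \<inter> V))"
    proof
      fix y assume "y \<in> p ` Op"
      then obtain x where x: "x \<in> Op" "y = p x" by blast
      then have "x \<in> topspace X" using openin_subset[OF Op] by blast
      then obtain V where "V \<in> S" "x \<in> V" using S_cover by blast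
      then show "y \<in> (\<Union>V\<in>S. p ` (Op \<inter> V))" using x by blast
    qed
    show "(\<Union>V\<in>S. p ` (Op \<inter> V)) \<subseteq> p ` Op" by blast
  qed
  moreover have "openin Y (p ` (Op \<inter> V))" if V: "V \<in> S" for V
  proof -
    have "slice X Y p V" using covS V by (simp add: covering_structure_def)
    then have h: "homeomorphic_map (subtopology X V) (subtopology Y (p ` V)) p" by (rule slice_homeo)
    have "openin (subtopology X V) (Op \<inter> V)" using Op by (rule openin_subtopology_Int)
    moreover have "Op \<inter> V \<subseteq> topspace (subtopology X V)" using openin_subset[OF Op] by auto
    ultimately have "openin (subtopology Y (p ` V)) (p ` (Op \<inter> V))" using homeomorphic_map_openness[OF h] by blast
    moreover have "openin Y (p ` V)" using PS_open V by blast
    ultimately show ?thesis by (rule openin_trans_full)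
  qed
  ultimately show ?thesis by (auto intro: openin_Union)
qed

lemma cont_by_star:
  fixes T :: "'c topology" and f :: "'c \<Rightarrow> 'a"
  assumes f_in: "\<And>t. t \<in> topspace T \<Longrightarrow> f t \<in> topspace X"
    and pf: "continuous_map T Y (\<lambda>t. p (f t))"
    and loc: "\<And>t. t \<in> topspace T \<Longrightarrow> \<exists>N. openin T N \<and> t \<in> N \<and> (\<forall>t'\<in>N. \<exists>A\<in>S. f t \<in> A \<and> f t' \<in> A)"
  shows "continuous_map T X f"
  unfolding continuous_map
proof (intro conjI allI impI)
  show "f ` topspace T \<subseteq> topspace X" using f_in by blast
  fix Op assume Op: "openin X Op"
  show "openin T {t \<in> topspace T. f t \<in> Op}"
  proof (subst openin_subopen, intro ballI)
    fix t assume t: "t \<in> {t \<in> topspace T. f t \<in> Op}"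
    then have tT: "t \<in> topspace T" and ftO: "f t \<in> Op" by auto
    obtain N where N: "openin T N" "t \<in> N" "\<forall>t'\<in>N. \<exists>A\<in>S. f t \<in> A \<and> f t' \<in> A" using loc[OF tT] by blast
    define Z where "Z = Op \<inter> star (f t) S"
    have "openin X Z" unfolding Z_def using Op star_open by auto
    then have "openin Y (p ` Z)" by (rule p_open)
    then have o2: "openin T {t' \<in> topspace T. p (f t') \<in> p ` Z}" using openin_continuous_map_preimage[OF pf] by blast
    define N' where "N' = N \<inter> {t' \<in> topspace T. p (f t') \<in> p ` Z}"
    have "openin T N'" unfolding N'_def using N(1) o2 by auto
    moreover have "t \<in> N'" unfolding N'_def Z_def using N(2) tT ftO star_in[OF f_in[OF tT]] by blast
    moreover have "N' \<subseteq> {t \<in> topspace T. f t \<in> Op}"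
    proof
      fix t' assume t': "t' \<in> N'"
      then have t'T: "t' \<in> topspace T" and t'N: "t' \<in> N" and pz: "p (f t') \<in> p ` Z" unfolding N'_def by auto
      obtain A where A: "A \<in> S" "f t \<in> A" "f t' \<in> A" using N(3) t'N by blast
      then have s1: "f t' \<in> star (f t) S" using star_sup by blast
      obtain z where z: "z \<in> Z" "p z = p (f t')" using pz by (metis imageE)
      have "z = f t'" using star_eq[OF f_in[OF tT] _ s1 z(2)] z(1) unfolding Z_def by blast
      then show "t' \<in> {t \<in> topspace T. f t \<in> Op}" using z(1) t'T unfolding Z_def by blast
    qed
    ultimately show "\<exists>T'. openin T T' \<and> t \<in> T' \<and> T' \<subseteq> {t \<in> topspace T. f t \<in> Op}" by blast
  qed
qed

lemma lift_nth: "islift x ys xs \<Longrightarrow> length xs = length ys"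
  "islift x ys xs \<Longrightarrow> i < length ys \<Longrightarrow> p (xs ! i) = ys ! i"
  unfolding islift_def by auto

end


context ov begin

lemma act_nth:
  assumes "reach a c" "b \<in> topspace X"
  shows "length (lift b (tr (p b) (map p c))) = length c"
    "i < length c \<Longrightarrow> p (lift b (tr (p b) (map p c)) ! i) = mY (p (c ! i)) (p b)"
proof -
  note L = act_lift[OF assms]
  show "length (lift b (tr (p b) (map p c))) = length c" using lift_nth(1)[OF L] by (simp add: tr_simps(1))
  assume i: "i < length c"
  show "p (lift b (tr (p b) (map p c)) ! i) = mY (p (c ! i)) (p b)"
    using lift_nth(2)[OF L] i by (simp add: tr_simps(1) tr_simps(2))
qed

lemma reach_nth_in: "reach a c \<Longrightarrow> i < length c \<Longrightarrow> p (c ! i) \<in> topspace Y"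
  unfolding reach_def using p_in by (meson nth_mem subsetD)

lemma UeS: "w \<in> topspace Y \<Longrightarrow> (\<lambda>u. mY u w) ` U \<in> (`) p ` S"
  unfolding PS_iff by blast

lemma M_loc:
  assumes a: "a \<in> topspace X" and b: "b \<in> topspace X"
  shows "\<exists>N. openin (prod_topology X X) N \<and> (a, b) \<in> N \<and>
           (\<forall>t'\<in>N. \<exists>A\<in>S. M a b \<in> A \<and> M (fst t') (snd t') \<in> A)"
proof -
  obtain c where c: "reach a c" using reach_ex a by blast
  define n where "n = length c"
  have ne: "c \<noteq> []" using reach_props[OF c] by simp
  have pa: "p a \<in> topspace Y" and pb: "p b \<in> topspace Y" using p_in a b by auto
  define ys where "ys = tr (p b) (map p c)"
  have ch: "is_chain ((`) p ` S) ys" unfolding ys_def using chain_tr[OF reach_chain[OF c] pb] .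
  obtain W where W: "openin Y W" "eY \<in> W" "\<forall>k\<in>W. \<forall>i. Suc i < length ys \<longrightarrow>
      (\<exists>P\<in>(`) p ` S. ys!i \<in> P \<and> ys!Suc i \<in> P \<and> mY (ys!i) k \<in> P \<and> mY (ys!Suc i) k \<in> P)"
    using tW[OF ch] by blast
  have lenys: "length ys = n" unfolding ys_def n_def by (simp add: tr_simps(1))
  obtain Va where Va: "Va \<in> S" "a \<in> Va" using S_cover a by blast
  obtain Vb where Vb: "Vb \<in> S" "b \<in> Vb" using S_cover b by blast
  define g where "g = mY (p a) (p b)"
  have g: "g \<in> topspace Y" unfolding g_def using m_in pa pb by simp
  define T where "T = prod_topology X X"
  have cf: "continuous_map T X fst" and cs: "continuous_map T X snd" unfolding T_def
    by (rule continuous_map_fst, rule continuous_map_snd)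
  have pf: "continuous_map T Y (\<lambda>t. p (fst t))" using continuous_map_compose[OF cf contp] by (simp add: o_def)
  have ps: "continuous_map T Y (\<lambda>t. p (snd t))" using continuous_map_compose[OF cs contp] by (simp add: o_def)
  define N1 where "N1 = {t \<in> topspace T. fst t \<in> Va}"
  define N2 where "N2 = {t \<in> topspace T. snd t \<in> Vb}"
  define N3 where "N3 = {t \<in> topspace T. mY (iY (p b)) (p (snd t)) \<in> W}"
  define N4 where "N4 = {t \<in> topspace T. mY (mY (p a) (p (snd t))) (iY g) \<in> U}"
  define N5 where "N5 = {t \<in> topspace T. mY (mY (p (fst t)) (p (snd t))) (iY g) \<in> U}"
  have o1: "openin T N1" unfolding N1_def using openin_continuous_map_preimage[OF cf S_open[OF Va(1)]] .
  have o2: "openin T N2" unfolding N2_def using openin_continuous_map_preimage[OF cs S_open[OF Vb(1)]] .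
  have "continuous_map T Y (\<lambda>t. mY (iY (p b)) (p (snd t)))"
    by (rule cont_m2[OF cont_const ps]) (simp add: i_in pb)
  then have o3: "openin T N3" unfolding N3_def using openin_continuous_map_preimage W(1) by blast
  have "continuous_map T Y (\<lambda>t. mY (mY (p a) (p (snd t))) (iY g))"
    by (rule cont_m2[OF cont_m2[OF cont_const ps] cont_const]) (simp_all add: i_in pa g)
  then have o4: "openin T N4" unfolding N4_def using openin_continuous_map_preimage Uopen by blast
  have "continuous_map T Y (\<lambda>t. mY (mY (p (fst t)) (p (snd t))) (iY g))"
    by (rule cont_m2[OF cont_m2[OF pf ps] cont_const]) (simp add: i_in g)
  then have o5: "openin T N5" unfolding N5_def using openin_continuous_map_preimage Uopen by blast
  define N where "N = N1 \<inter> N2 \<inter> N3 \<inter> N4 \<inter> N5"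
  have "openin T N" unfolding N_def using o1 o2 o3 o4 o5 by blast
  moreover have "(a, b) \<in> N" unfolding N_def N1_def N2_def N3_def N4_def N5_def T_def
    using a b Va Vb W(2) eU pa pb g by (simp add: linv rinv g_def)
  moreover have "\<forall>t'\<in>N. \<exists>A\<in>S. M a b \<in> A \<and> M (fst t') (snd t') \<in> A"
  proof
    fix t' assume t': "t' \<in> N"
    define a' where "a' = fst t'"
    define b' where "b' = snd t'"
    have a': "a' \<in> topspace X" "a' \<in> Va" and b': "b' \<in> topspace X" "b' \<in> Vb"
      and kW: "mY (iY (p b)) (p b') \<in> W"
      and c4: "mY (mY (p a) (p b')) (iY g) \<in> U" and c5: "mY (mY (p a') (p b')) (iY g) \<in> U"
      using t' unfolding N_def N1_def N2_def N3_def N4_def N5_def T_def a'_def b'_def by auto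
    have pa': "p a' \<in> topspace Y" and pb': "p b' \<in> topspace Y" using p_in a' b' by auto
    define k where "k = mY (iY (p b)) (p b')"
    define c1 where "c1 = c @ [a]"
    define c2 where "c2 = c @ [a']"
    have r1: "reach a c1" unfolding c1_def using reach_snoc[OF c Va(1) Va(2) Va(2)] .
    have r2: "reach a' c2" unfolding c2_def using reach_snoc[OF c Va(1) Va(2) a'(2)] .
    define xs where "xs = lift b (tr (p b) (map p c1))"
    define xs' where "xs' = lift b' (tr (p b') (map p c2))"
    have I1: "islift b (tr (p b) (map p c1)) xs" unfolding xs_def using act_lift[OF r1 b] .
    have I2: "islift b' (tr (p b') (map p c2)) xs'" unfolding xs'_def using act_lift[OF r2 b'(1)] .
    have len1: "length xs = Suc n" unfolding xs_def using act_nth(1)[OF r1 b] unfolding c1_def n_def by simp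
    have len2: "length xs' = Suc n" unfolding xs'_def using act_nth(1)[OF r2 b'(1)] unfolding c2_def n_def by simp
    have px1: "\<And>i. i < Suc n \<Longrightarrow> p (xs ! i) = mY (p (c1 ! i)) (p b)"
      unfolding xs_def using act_nth(2)[OF r1 b] unfolding c1_def n_def by simp
    have px2: "\<And>i. i < Suc n \<Longrightarrow> p (xs' ! i) = mY (p (c2 ! i)) (p b')"
      unfolding xs'_def using act_nth(2)[OF r2 b'(1)] unfolding c2_def n_def by simp
    have "\<exists>A\<in>S. last xs \<in> A \<and> last xs' \<in> A"
    proof (rule ladder)
      show "is_chain S xs" "is_chain S xs'" "set xs \<subseteq> topspace X" "set xs' \<subseteq> topspace X"
        using I1 I2 unfolding islift_def by auto
      show "length xs' = length xs" using len1 len2 by simp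
      have "hd xs = b" "hd xs' = b'" using I1 I2 unfolding islift_def by auto
      then show "\<exists>V\<in>S. hd xs \<in> V \<and> hd xs' \<in> V" using Vb b' by blast
      fix i assume i: "Suc i < length xs"
      then have i1: "Suc i < Suc n" using len1 by simp
      show "\<exists>P\<in>(`) p ` S. p (xs!i) \<in> P \<and> p (xs!Suc i) \<in> P \<and> p (xs'!i) \<in> P \<and> p (xs'!Suc i) \<in> P"
      proof (cases "Suc i < n")
        case True
        have kk: "k \<in> W" using kW k_def by simp
        obtain P where P: "P \<in> (`) p ` S" "ys!i \<in> P" "ys!Suc i \<in> P" "mY (ys!i) k \<in> P" "mY (ys!Suc i) k \<in> P"
          using W(3)[rule_format, OF kk, of i] True lenys by meson
        have e: "\<And>j. j < n \<Longrightarrow> c1 ! j = c ! j \<and> c2 ! j = c ! j" unfolding c1_def c2_def n_def by (simp add: nth_append)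
        have ysj: "\<And>j. j < n \<Longrightarrow> ys ! j = mY (p (c ! j)) (p b)" unfolding ys_def n_def by (simp add: tr_simps(2))
        have ysk: "\<And>j. j < n \<Longrightarrow> mY (ys ! j) k = mY (p (c ! j)) (p b')"
          using ysj shift_cancel reach_nth_in[OF c] pb pb' unfolding k_def n_def by simp
        have "p (xs!i) = ys!i" "p (xs!Suc i) = ys!Suc i" "p (xs'!i) = mY (ys!i) k" "p (xs'!Suc i) = mY (ys!Suc i) k"
          using px1 px2 e ysj ysk True by simp_all
        then show ?thesis using P by metis
      next
        case False
        then have i2: "Suc i = n" using i1 by simp
        have ca: "c ! i = a" using c ne i2 unfolding reach_def n_def by (metis diff_Suc_1 last_conv_nth)
        have e: "c1 ! i = a" "c1 ! Suc i = a" "c2 ! i = a" "c2 ! Suc i = a'"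
          unfolding c1_def c2_def using ca i2 unfolding n_def by (simp_all add: nth_append)
        have "p (xs!i) = g" "p (xs!Suc i) = g" "p (xs'!i) = mY (p a) (p b')" "p (xs'!Suc i) = mY (p a') (p b')"
          using px1 px2 e i1 i2 unfolding g_def by simp_all
        moreover have "g \<in> (\<lambda>u. mY u g) ` U" using mem_transl[OF U_sub g] g rinv eU by simp
        moreover have "mY (p a) (p b') \<in> (\<lambda>u. mY u g) ` U" using mem_transl[OF U_sub g] c4 m_in pa pb' by simp
        moreover have "mY (p a') (p b') \<in> (\<lambda>u. mY u g) ` U" using mem_transl[OF U_sub g] c5 m_in pa' pb' by simp
        ultimately show ?thesis using UeS[OF g] by metis
      qed
    qed
    moreover have "M a b = last xs" using M_eq[OF r1 b] unfolding act_def xs_def by simp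
    moreover have "M (fst t') (snd t') = last xs'" using M_eq[OF r2 b'(1)] unfolding act_def xs'_def a'_def b'_def by simp
    ultimately show "\<exists>A\<in>S. M a b \<in> A \<and> M (fst t') (snd t') \<in> A" by simp
  qed
  ultimately show ?thesis unfolding T_def by blast
qed

lemma M_cont: "continuous_map (prod_topology X X) X (\<lambda>t. M (fst t) (snd t))"
proof (rule cont_by_star)
  fix t assume "t \<in> topspace (prod_topology X X)"
  then show "M (fst t) (snd t) \<in> topspace X" using M_props by (auto simp: mem_Times_iff)
next
  have pf: "continuous_map (prod_topology X X) Y (\<lambda>t. p (fst t))"
    using continuous_map_compose[OF continuous_map_fst contp] by (simp add: o_def)
  have ps: "continuous_map (prod_topology X X) Y (\<lambda>t. p (snd t))"
    using continuous_map_compose[OF continuous_map_snd contp] by (simp add: o_def)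
  have "continuous_map (prod_topology X X) Y (\<lambda>t. mY (p (fst t)) (p (snd t)))" by (rule cont_m2[OF pf ps])
  then show "continuous_map (prod_topology X X) Y (\<lambda>t. p (M (fst t) (snd t)))"
    by (rule continuous_map_eq) (auto simp: M_props mem_Times_iff)
next
  fix t assume "t \<in> topspace (prod_topology X X)"
  then obtain a b where t: "t = (a, b)" "a \<in> topspace X" "b \<in> topspace X" by (cases t) (auto simp: mem_Times_iff)
  show "\<exists>N. openin (prod_topology X X) N \<and> t \<in> N \<and> (\<forall>t'\<in>N. \<exists>A\<in>S. M (fst t) (snd t) \<in> A \<and> M (fst t') (snd t') \<in> A)"
    using M_loc[OF t(2) t(3)] t(1) by simp
qed

end


context ov begin

lemma inv_lift:
  assumes c: "reach a c"
  shows "islift e0 (tr (iY (p a)) (map p (rev c))) (lift e0 (tr (iY (p a)) (map p (rev c))))"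
proof -
  have a: "a \<in> topspace X" and ne: "c \<noteq> []" using reach_props[OF c] by auto
  have pa: "p a \<in> topspace Y" using p_in a by simp
  define ys where "ys = tr (iY (p a)) (map p (rev c))"
  have ch: "is_chain ((`) p ` S) ys" unfolding ys_def using chain_tr[OF reach_rev_chain[OF c]] i_in pa by simp
  have "hd ys = mY (p a) (iY (p a))" unfolding ys_def using ne c unfolding reach_def by (simp add: tr_simps(5) hd_map hd_rev)
  then have "p e0 = hd ys" using e0 rinv pa by simp
  from lift_islift[OF ch e0(1) this] show ?thesis unfolding ys_def .
qed

lemma I_loc:
  assumes a: "a \<in> topspace X"
  shows "\<exists>N. openin X N \<and> a \<in> N \<and> (\<forall>a'\<in>N. \<exists>A\<in>S. I a \<in> A \<and> I a' \<in> A)"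
proof -
  obtain c where c: "reach a c" using reach_ex a by blast
  define n where "n = length c"
  have ne: "c \<noteq> []" using reach_props[OF c] by simp
  have pa: "p a \<in> topspace Y" using p_in a by auto
  define rc where "rc = rev c"
  have prc: "\<And>j. j < n \<Longrightarrow> p (rc ! j) \<in> topspace Y"
    using c p_in unfolding reach_def rc_def n_def by (metis length_rev nth_mem set_rev subsetD)
  define ys where "ys = tr (iY (p a)) (map p rc)"
  have ch: "is_chain ((`) p ` S) ys" unfolding ys_def rc_def using chain_tr[OF reach_rev_chain[OF c]] i_in pa by simp
  obtain W where W: "openin Y W" "eY \<in> W" "\<forall>k\<in>W. \<forall>i. Suc i < length ys \<longrightarrow>
      (\<exists>P\<in>(`) p ` S. ys!i \<in> P \<and> ys!Suc i \<in> P \<and> mY (ys!i) k \<in> P \<and> mY (ys!Suc i) k \<in> P)"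
    using tW[OF ch] by blast
  have lenys: "length ys = n" unfolding ys_def n_def rc_def by (simp add: tr_simps(1))
  have ysj: "\<And>j. j < n \<Longrightarrow> ys ! j = mY (p (rc ! j)) (iY (p a))" unfolding ys_def n_def rc_def by (simp add: tr_simps(2))
  obtain Va where Va: "Va \<in> S" "a \<in> Va" using S_cover a by blast
  have "continuous_map X Y (\<lambda>x. mY (p a) (iY (p x)))"
    by (rule cont_m2[OF cont_const cont_i2[OF contp]]) (simp add: pa)
  then have oN: "openin X {x \<in> topspace X. mY (p a) (iY (p x)) \<in> W \<inter> U}"
    using openin_continuous_map_preimage W(1) Uopen by blast
  define N where "N = Va \<inter> {x \<in> topspace X. mY (p a) (iY (p x)) \<in> W \<inter> U}"
  have "openin X N" unfolding N_def using oN S_open[OF Va(1)] by blast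
  moreover have "a \<in> N" unfolding N_def using Va a W(2) eU pa by (simp add: rinv)
  moreover have "\<forall>a'\<in>N. \<exists>A\<in>S. I a \<in> A \<and> I a' \<in> A"
  proof
    fix a' assume "a' \<in> N"
    then have a': "a' \<in> topspace X" "a' \<in> Va" and kWU: "mY (p a) (iY (p a')) \<in> W" "mY (p a) (iY (p a')) \<in> U"
      unfolding N_def by auto
    have pa': "p a' \<in> topspace Y" using p_in a' by simp
    define k where "k = mY (p a) (iY (p a'))"
    define c1 where "c1 = c @ [a]"
    define c2 where "c2 = c @ [a']"
    have r1: "reach a c1" unfolding c1_def using reach_snoc[OF c Va(1) Va(2) Va(2)] .
    have r2: "reach a' c2" unfolding c2_def using reach_snoc[OF c Va(1) Va(2) a'(2)] .
    have Ia: "I a = inv_of c1 a" using inv_unique[OF a inv_of_props(1)[OF r1] inv_of_props(3)[OF r1]] by simp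
    have Ia': "I a' = inv_of c2 a'" using inv_unique[OF a'(1) inv_of_props(1)[OF r2] inv_of_props(3)[OF r2]] by simp
    define xs where "xs = lift e0 (tr (iY (p a)) (map p (rev c1)))"
    define xs' where "xs' = lift e0 (tr (iY (p a')) (map p (rev c2)))"
    have I1: "islift e0 (tr (iY (p a)) (map p (rev c1))) xs" unfolding xs_def using inv_lift[OF r1] .
    have I2: "islift e0 (tr (iY (p a')) (map p (rev c2))) xs'" unfolding xs'_def using inv_lift[OF r2] .
    have rv: "rev c1 = a # rc" "rev c2 = a' # rc" unfolding c1_def c2_def rc_def by simp_all
    have len1: "length xs = Suc n" using lift_nth(1)[OF I1] rv unfolding rc_def n_def by (simp add: tr_simps(1))
    have len2: "length xs' = Suc n" using lift_nth(1)[OF I2] rv unfolding rc_def n_def by (simp add: tr_simps(1))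
    have px1: "\<And>i. i < Suc n \<Longrightarrow> p (xs ! i) = mY (p ((a # rc) ! i)) (iY (p a))"
    proof -
      fix i assume i: "i < Suc n"
      have lr: "length (rev c1) = Suc n" using rv unfolding rc_def n_def by simp
      have "p (xs ! i) = tr (iY (p a)) (map p (rev c1)) ! i" using lift_nth(2)[OF I1] i lr by (simp add: tr_simps(1))
      also have "\<dots> = mY (map p (rev c1) ! i) (iY (p a))" using i lr by (simp add: tr_simps(2))
      also have "\<dots> = mY (p (rev c1 ! i)) (iY (p a))" using i lr by simp
      finally show "p (xs ! i) = mY (p ((a # rc) ! i)) (iY (p a))" using rv by simp
    qed
    have px2: "\<And>i. i < Suc n \<Longrightarrow> p (xs' ! i) = mY (p ((a' # rc) ! i)) (iY (p a'))"
    proof -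
      fix i assume i: "i < Suc n"
      have lr: "length (rev c2) = Suc n" using rv unfolding rc_def n_def by simp
      have "p (xs' ! i) = tr (iY (p a')) (map p (rev c2)) ! i" using lift_nth(2)[OF I2] i lr by (simp add: tr_simps(1))
      also have "\<dots> = mY (map p (rev c2) ! i) (iY (p a'))" using i lr by (simp add: tr_simps(2))
      also have "\<dots> = mY (p (rev c2 ! i)) (iY (p a'))" using i lr by simp
      finally show "p (xs' ! i) = mY (p ((a' # rc) ! i)) (iY (p a'))" using rv by simp
    qed
    have "\<exists>A\<in>S. last xs \<in> A \<and> last xs' \<in> A"
    proof (rule ladder)
      show "is_chain S xs" "is_chain S xs'" "set xs \<subseteq> topspace X" "set xs' \<subseteq> topspace X"
        using I1 I2 unfolding islift_def by auto
      show "length xs' = length xs" using len1 len2 by simp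
      have "hd xs = e0" "hd xs' = e0" using I1 I2 unfolding islift_def by auto
      then show "\<exists>V\<in>S. hd xs \<in> V \<and> hd xs' \<in> V" using S_cover e0(1) by auto
      fix i assume i: "Suc i < length xs"
      then have i1: "Suc i < Suc n" using len1 by simp
      show "\<exists>P\<in>(`) p ` S. p (xs!i) \<in> P \<and> p (xs!Suc i) \<in> P \<and> p (xs'!i) \<in> P \<and> p (xs'!Suc i) \<in> P"
      proof (cases i)
        case 0
        have rc0: "rc ! 0 = a" using c ne unfolding reach_def rc_def by (simp add: hd_rev[symmetric] hd_conv_nth)
        have "p (xs!i) = eY" "p (xs!Suc i) = eY" "p (xs'!i) = eY" "p (xs'!Suc i) = k"
          using px1 px2 i1 0 rc0 pa pa' unfolding k_def by (simp_all add: rinv)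
        moreover have "eY \<in> (\<lambda>u. mY u eY) ` U" using mem_transl[OF U_sub e_in] e_in eU by (simp add: i_e rid)
        moreover have "k \<in> (\<lambda>u. mY u eY) ` U"
          using mem_transl[OF U_sub e_in] kWU(2) m_in i_in pa pa' unfolding k_def by (simp add: i_e rid)
        ultimately show ?thesis using UeS[OF e_in] by metis
      next
        case (Suc j)
        then have j: "Suc j < n" using i1 by simp
        have kk: "k \<in> W" using kWU k_def by simp
        obtain P where P: "P \<in> (`) p ` S" "ys!j \<in> P" "ys!Suc j \<in> P" "mY (ys!j) k \<in> P" "mY (ys!Suc j) k \<in> P"
          using W(3)[rule_format, OF kk, of j] j lenys by meson
        have ysk: "\<And>j. j < n \<Longrightarrow> mY (ys ! j) k = mY (p (rc ! j)) (iY (p a'))"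
        proof -
          fix j assume j: "j < n"
          have "mY (ys ! j) k = mY (mY (p (rc ! j)) (iY (p a))) (mY (iY (iY (p a))) (iY (p a')))"
            using ysj[OF j] i_i pa unfolding k_def by simp
          also have "\<dots> = mY (p (rc ! j)) (iY (p a'))" using shift_cancel prc[OF j] i_in pa pa' by simp
          finally show "mY (ys ! j) k = mY (p (rc ! j)) (iY (p a'))" .
        qed
        have "p (xs!i) = ys!j" "p (xs!Suc i) = ys!Suc j" "p (xs'!i) = mY (ys!j) k" "p (xs'!Suc i) = mY (ys!Suc j) k"
          using px1 px2 ysj ysk j i1 Suc by simp_all
        then show ?thesis using P by metis
      qed
    qed
    moreover have "I a = last xs" using Ia unfolding inv_of_def xs_def by simp
    moreover have "I a' = last xs'" using Ia' unfolding inv_of_def xs'_def by simp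
    ultimately show "\<exists>A\<in>S. I a \<in> A \<and> I a' \<in> A" by simp
  qed
  ultimately show ?thesis by blast
qed

lemma I_cont: "continuous_map X X I"
proof (rule cont_by_star)
  show "\<And>t. t \<in> topspace X \<Longrightarrow> I t \<in> topspace X" using I_props by blast
  show "continuous_map X Y (\<lambda>t. p (I t))"
    by (rule continuous_map_eq[OF cont_i2[OF contp]]) (simp add: I_props)
  show "\<And>t. t \<in> topspace X \<Longrightarrow> \<exists>N. openin X N \<and> t \<in> N \<and> (\<forall>t'\<in>N. \<exists>A\<in>S. I t \<in> A \<and> I t' \<in> A)"
    by (rule I_loc)
qed

lemma main: "\<exists>m i e. topological_group X m i e \<and> (\<forall>a\<in>topspace X. \<forall>b\<in>topspace X. p (m a b) = mY (p a) (p b))"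
proof (intro exI conjI)
  have eq: "(\<lambda>(a, b). M a b) = (\<lambda>t. M (fst t) (snd t))" by auto
  show "topological_group X M I e0"
    unfolding topological_group_def eq
  proof (intro conjI ballI)
    show "e0 \<in> topspace X" by (rule e0(1))
    show "continuous_map (prod_topology X X) X (\<lambda>t. M (fst t) (snd t))" by (rule M_cont)
    show "continuous_map X X I" by (rule I_cont)
    fix a assume a: "a \<in> topspace X"
    show "I a \<in> topspace X" using I_props(1)[OF a] .
    show "M e0 a = a" using M_lid[OF a] .
    show "M a e0 = a" using M_rid[OF a] .
    show "M (I a) a = e0" using M_linv[OF a] .
    show "M a (I a) = e0" using I_props(3)[OF a] .
    fix b assume b: "b \<in> topspace X"
    show "M a b \<in> topspace X" using M_props(1)[OF a b] .
    fix c assume c: "c \<in> topspace X"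
    show "M (M a b) c = M a (M b c)" using M_assoc[OF a b c] .
  qed
  show "\<forall>a\<in>topspace X. \<forall>b\<in>topspace X. p (M a b) = mY (p a) (p b)" using M_props(2) by blast
qed

end

theorem theorem6p4:
  fixes X :: "'a topology" and Y :: "'b topology" and p :: "'a \<Rightarrow> 'b"
    and mY :: "'b \<Rightarrow> 'b \<Rightarrow> 'b" and iY :: "'b \<Rightarrow> 'b" and eY :: "'b"
    and U :: "'b set"
  assumes "continuous_map X Y p"
    and "p ` topspace X = topspace Y"
    and "connected_space X"
    and "topological_group Y mY iY eY"
    and "openin Y U" and "eY \<in> U"
    and "overlay_cover X Y p ((\<lambda>y. (\<lambda>u. mY u y) ` U) ` topspace Y)"
    and "\<exists>S. regular_overlay_structure X Y p S"
  shows "\<exists>m i e. topological_group X m i e \<and> continuous_map X Y p \<and>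
           (\<forall>a\<in>topspace X. \<forall>b\<in>topspace X. p (m a b) = mY (p a) (p b))"
proof -
  obtain S where S: "overlay_structure X Y p S" "(`) p ` S = (\<lambda>y. (\<lambda>u. mY u y) ` U) ` topspace Y"
    using assms(7) unfolding overlay_cover_def by blast
  have "ov Y mY iY eY X p U S"
    unfolding ov_def ov_axioms_def tgrp_def using assms(1-6) S by blast
  then have "\<exists>m i e. topological_group X m i e \<and> (\<forall>a\<in>topspace X. \<forall>b\<in>topspace X. p (m a b) = mY (p a) (p b))"
    by (rule ov.main)
  then show ?thesis using assms(1) by blast
qed

end
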